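(* Let $n_0\ge1$ and $n_1=2n_0$. For $\ell\in\{0,1\}$ let $\mathbf{h}^\ell_k\in\mathbb{R}^{n_\ell}$, $k=0,\dots,n_\ell-1$, be the vectors with entries $(\mathbf{h}^\ell_k)_j=\cos\frac{2(j+\frac12)k\pi}{n_\ell}+\sin\frac{2(j+\frac12)k\pi}{n_\ell}$, $j=0,\dots,n_\ell-1$. Let $\mathbf{P}\in\mathbb{R}^{n_1\times n_0}$ be defined by $\mathbf{P}_{2j,j}=\mathbf{P}_{2j+1,j}=1$ for $j=0,\dots,n_0-1$ and all other entries $0$, and let $c_k:=\cos(k\pi/n_1)$. Then for all $k=0,\dots,n_0-1$, $\mathbf{P}\mathbf{h}^0_k=c_k\mathbf{h}^1_k-c_{n_0+k}\mathbf{h}^1_{n_0+k}$.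
   Context: Indices of vectors and matrices start at $0$. *)

theory Defs
  imports Complex_Main
begin

text \<open>Vectors in R^n are represented as functions nat \<Rightarrow> real, with entries indexed
  by 0..n-1; matrices as functions nat \<Rightarrow> nat \<Rightarrow> real (row, column).\<close>

definition hvec :: "nat \<Rightarrow> nat \<Rightarrow> nat \<Rightarrow> real" where
  "hvec n k j = cos (2 * (real j + 1/2) * real k * pi / real n)
              + sin (2 * (real j + 1/2) * real k * pi / real n)"

definition Pmat :: "nat \<Rightarrow> nat \<Rightarrow> nat \<Rightarrow> real" where
  "Pmat n0 i j = (if j < n0 \<and> (i = 2 * j \<or> i = 2 * j + 1) then 1 else 0)"

definition mat_vec :: "nat \<Rightarrow> (nat \<Rightarrow> nat \<Rightarrow> real) \<Rightarrow> (nat \<Rightarrow> real) \<Rightarrow> nat \<Rightarrow> real" where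
  "mat_vec m A x i = (\<Sum>j<m. A i j * x j)"

end

theory Submission
  imports Defs
begin

lemma mv: assumes "i < 2 * n0"
  shows "mat_vec n0 (Pmat n0) x i = x (i div 2)"
proof -
  have "mat_vec n0 (Pmat n0) x i = (\<Sum>j<n0. if j = i div 2 then x j else 0)"
    unfolding mat_vec_def Pmat_def by (rule sum.cong) auto
  also have "\<dots> = x (i div 2)" using assms by (simp add: sum.delta less_mult_imp_div_less)
  finally show ?thesis .
qed

lemma trig_even:
  fixes p a f :: real and m :: nat
  assumes "a = real m * pi + pi/2 + b"
  shows "cos a + sin a = (-1)^m * (cos b - sin b)"
  using assms by (simp add: cos_add sin_add cos_npi sin_npi algebra_simps)

theorem mainTheorem9:
  fixes n0 n1 :: nat
  assumes "n0 \<ge> 1" and "n1 = 2 * n0"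
  shows "\<forall>k < n0. \<forall>i < n1.
    mat_vec n0 (Pmat n0) (hvec n0 k) i =
      cos (real k * pi / real n1) * hvec n1 k i
      - cos (real (n0 + k) * pi / real n1) * hvec n1 (n0 + k) i"
proof (intro allI impI)
  fix k i assume k: "k < n0" and i: "i < n1"
  define f where "f = real k * pi / (2 * real n0)"
  have n0: "real n0 > 0" using assms by simp
  have L: "mat_vec n0 (Pmat n0) (hvec n0 k) i = hvec n0 k (i div 2)"
    using mv i assms by simp
  have c1: "cos (real k * pi / real n1) = cos f" using assms f_def by simp
  have c2: "cos (real (n0 + k) * pi / real n1) = - sin f"
  proof -
    have "real (n0 + k) * pi / real n1 = pi/2 + f" using assms n0 f_def
      by (simp add: field_simps)
    thus ?thesis by (simp add: cos_add)
  qed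
  define a where "a = (2 * real i + 1) * f"
  have h1: "hvec n1 k i = cos a + sin a"
  proof -
    have "2 * (real i + 1/2) * real k * pi / real n1 = a"
      unfolding a_def f_def using assms n0 by (simp add: field_simps)
    thus ?thesis unfolding hvec_def by simp
  qed
  have h2: "hvec n1 (n0 + k) i = (-1)^i * (cos a - sin a)"
  proof -
    have "2 * (real i + 1/2) * real (n0 + k) * pi / real n1 = real i * pi + pi/2 + a"
      unfolding a_def f_def using assms n0 by (simp add: field_simps)
    thus ?thesis unfolding hvec_def by (rule trig_even)
  qed
  show "mat_vec n0 (Pmat n0) (hvec n0 k) i =
      cos (real k * pi / real n1) * hvec n1 k i
      - cos (real (n0 + k) * pi / real n1) * hvec n1 (n0 + k) i"
  proof (cases "even i")
    case True
    then obtain j where j: "i = 2 * j" by blast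
    have e: "hvec n0 k (i div 2) = cos (a + f) + sin (a + f)"
    proof -
      have "2 * (real (i div 2) + 1/2) * real k * pi / real n0 = a + f"
        unfolding a_def f_def j using n0 by (simp add: field_simps)
      thus ?thesis unfolding hvec_def by simp
    qed
    have m: "(-1::real)^i = 1" using True by simp
    show ?thesis unfolding L c1 c2 h1 h2 e m
      by (simp add: cos_add sin_add algebra_simps)
  next
    case False
    then obtain j where j: "i = 2 * j + 1" using oddE by blast
    have e: "hvec n0 k (i div 2) = cos (a - f) + sin (a - f)"
    proof -
      have "2 * (real (i div 2) + 1/2) * real k * pi / real n0 = a - f"
        unfolding a_def f_def j using n0 by (simp add: field_simps)
      thus ?thesis unfolding hvec_def by simp
    qed
    have m: "(-1::real)^i = -1" using False by simp
    show ?thesis unfolding L c1 c2 h1 h2 e m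
      by (simp add: cos_diff sin_diff algebra_simps)
  qed
qed

end
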